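(* Let $a,b\colon\mathbb N\to\mathbb Z\setminus\{0\}$ be two injective sequences. Then there exist a probability space $(X,\mathcal X,\mu)$ and measure preserving transformations $T,S\colon X\to X$, both Bernoulli, such that (i) for some $f,g\in L^\infty(\mu)$ the averages $\frac1N\sum_{n=1}^N\int f\circ T^{a(n)}\cdot g\circ S^{b(n)}\,d\mu$ diverge as $N\to\infty$; and (ii) for some $A\in\mathcal X$ with $\mu(A)>0$ one has $\mu(T^{-a(n)}A\cap S^{-b(n)}A)=0$ for every $n\in\mathbb N$.
   Context: A measure preserving transformation $T$ of $(X,\mathcal X,\mu)$ is called Bernoulli if $(X,\mathcal X,\mu,T)$ is isomorphic to a (two-sided) Bernoulli shift on finitely many symbols; in particular it is invertible, so negative powers make sense. *)

theory Defs
  imports "HOL-Probability.Probability"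
begin

definition mp_map :: "'a measure \<Rightarrow> 'b measure \<Rightarrow> ('a \<Rightarrow> 'b) \<Rightarrow> bool" where
  "mp_map M N f \<longleftrightarrow> f \<in> measurable M N \<and>
     (\<forall>A\<in>sets N. emeasure M (f -` A \<inter> space M) = emeasure N A)"

definition invertible_mpt :: "'a measure \<Rightarrow> ('a \<Rightarrow> 'a) \<Rightarrow> bool" where
  "invertible_mpt M T \<longleftrightarrow> mp_map M M T \<and> bij_betw T (space M) (space M) \<and>
     mp_map M M (the_inv_into (space M) T)"

definition ipow :: "'a measure \<Rightarrow> ('a \<Rightarrow> 'a) \<Rightarrow> int \<Rightarrow> 'a \<Rightarrow> 'a" where
  "ipow M T k = (if 0 \<le> k then T ^^ nat k else (the_inv_into (space M) T) ^^ nat (- k))"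

definition bernoulli_shift :: "nat pmf \<Rightarrow> (int \<Rightarrow> nat) measure" where
  "bernoulli_shift p = PiM UNIV (\<lambda>_. measure_pmf p)"

definition shift :: "(int \<Rightarrow> nat) \<Rightarrow> (int \<Rightarrow> nat)" where
  "shift x = (\<lambda>i. x (i + 1))"

definition mpt_iso :: "'a measure \<Rightarrow> ('a \<Rightarrow> 'a) \<Rightarrow> 'b measure \<Rightarrow> ('b \<Rightarrow> 'b) \<Rightarrow> bool" where
  "mpt_iso M T N S \<longleftrightarrow> (\<exists>X0 Y0 \<phi>.
     X0 \<in> sets M \<and> Y0 \<in> sets N \<and>
     emeasure M (space M - X0) = 0 \<and> emeasure N (space N - Y0) = 0 \<and>
     T ` X0 \<subseteq> X0 \<and> S ` Y0 \<subseteq> Y0 \<and>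
     bij_betw \<phi> X0 Y0 \<and>
     mp_map (restrict_space M X0) (restrict_space N Y0) \<phi> \<and>
     mp_map (restrict_space N Y0) (restrict_space M X0) (the_inv_into X0 \<phi>) \<and>
     (\<forall>x\<in>X0. \<phi> (T x) = S (\<phi> x)))"

definition bernoulli :: "'a measure \<Rightarrow> ('a \<Rightarrow> 'a) \<Rightarrow> bool" where
  "bernoulli M T \<longleftrightarrow> invertible_mpt M T \<and>
     (\<exists>p. finite (set_pmf p) \<and> mpt_iso M T (bernoulli_shift p) shift)"

end

theory Submission
  imports Defs
begin
definition rho :: "(int \<Rightarrow> int) \<Rightarrow> (int \<Rightarrow> nat) \<Rightarrow> (int \<Rightarrow> nat)" where
  "rho \<sigma> x = x \<circ> \<sigma>"

lemma space_PiM_pmf[simp]: "space (PiM UNIV (\<lambda>_. measure_pmf p)) = UNIV"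
  by (simp add: space_PiM)

lemma space_bs[simp]: "space (bernoulli_shift p) = UNIV"
  by (simp add: bernoulli_shift_def space_PiM)

lemma sets_bs: "sets (bernoulli_shift p) = sets (PiM UNIV (\<lambda>_. measure_pmf p))"
  by (simp add: bernoulli_shift_def)

lemma prob_space_bs: "prob_space (bernoulli_shift p)"
  unfolding bernoulli_shift_def by (intro prob_space_PiM prob_space_measure_pmf)

lemma rho_measurable[measurable]: "rho \<sigma> \<in> measurable (bernoulli_shift p) (bernoulli_shift p)"
  unfolding bernoulli_shift_def rho_def o_def
  by (intro measurable_PiM_single') (auto simp: space_PiM)

lemma rho_distr: assumes "bij \<sigma>"
  shows "distr (bernoulli_shift p) (bernoulli_shift p) (rho \<sigma>) = bernoulli_shift p"
proof -
  have "distr (PiM UNIV (\<lambda>_. measure_pmf p)) (PiM UNIV (\<lambda>i. measure_pmf p)) (\<lambda>\<omega>. \<lambda>n\<in>UNIV. \<omega> (\<sigma> n))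
       = PiM UNIV (\<lambda>i. measure_pmf p)"
    by (rule distr_PiM_reindex) (use assms in \<open>auto simp: bij_def prob_space_measure_pmf\<close>)
  then show ?thesis unfolding bernoulli_shift_def rho_def o_def restrict_UNIV by simp
qed

lemma mp_map_distr:
  assumes "f \<in> measurable M N" "distr M N f = N"
  shows "mp_map M N f"
  unfolding mp_map_def
proof (intro conjI ballI assms(1))
  fix A assume "A \<in> sets N"
  then show "emeasure M (f -` A \<inter> space M) = emeasure N A"
    using emeasure_distr[OF assms(1), of A] assms(2) by simp
qed

lemma rho_mp: "bij \<sigma> \<Longrightarrow> mp_map (bernoulli_shift p) (bernoulli_shift p) (rho \<sigma>)"
  by (intro mp_map_distr rho_measurable rho_distr)

lemma rho_comp: "rho \<sigma> (rho \<tau> x) = rho (\<tau> \<circ> \<sigma>) x"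
  by (simp add: rho_def o_assoc)

lemma rho_id: "rho id x = x" by (simp add: rho_def)

lemma rho_bij: assumes "bij \<sigma>" shows "bij (rho \<sigma>)"
proof -
  have "rho (inv \<sigma>) (rho \<sigma> x) = x" "rho \<sigma> (rho (inv \<sigma>) x) = x" for x
    using assms by (simp_all add: rho_comp bij_is_inj[THEN inv_o_cancel] surj_iff[THEN iffD1, OF bij_is_surj] rho_id)
  then show ?thesis by (intro o_bij[of "rho (inv \<sigma>)"]) (auto simp: fun_eq_iff)
qed

lemma rho_inv: assumes "bij \<sigma>" shows "the_inv_into UNIV (rho \<sigma>) = rho (inv \<sigma>)"
proof
  fix y
  have "rho \<sigma> (rho (inv \<sigma>) y) = y"
    using assms by (simp add: rho_comp bij_is_inj[THEN inv_o_cancel] rho_id)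
  then show "the_inv_into UNIV (rho \<sigma>) y = rho (inv \<sigma>) y"
    using rho_bij[OF assms] by (metis bij_is_inj the_inv_f_f)
qed

definition Rc :: "(int \<Rightarrow> int) \<Rightarrow> int \<Rightarrow> (int \<Rightarrow> nat) \<Rightarrow> (int \<Rightarrow> nat)" where
  "Rc \<pi> m = rho (\<pi> \<circ> (\<lambda>i. i + 4*m) \<circ> inv \<pi>)"

lemma Rc_apply: "Rc \<pi> m x i = x (\<pi> (inv \<pi> i + 4*m))"
  by (simp add: Rc_def rho_def)

lemma Rc_add: assumes "bij \<pi>" shows "Rc \<pi> s (Rc \<pi> t x) = Rc \<pi> (s+t) x"
  using assms by (simp add: Rc_apply fun_eq_iff bij_is_inj algebra_simps)

lemma Rc_0: assumes "bij \<pi>" shows "Rc \<pi> 0 x = x"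
  using assms by (simp add: Rc_apply fun_eq_iff bij_is_surj surj_f_inv_f)

lemma bij_Rc_perm: fixes m :: int assumes "bij \<pi>" shows "bij (\<pi> \<circ> (\<lambda>i. i + 4*m) \<circ> inv \<pi>)"
proof -
  have "bij (\<lambda>i::int. i + 4*m)" for m :: int by (rule bij_betwI[where g="\<lambda>i. i - 4*m"]) auto
  then show ?thesis using assms by (intro bij_comp bij_imp_bij_inv) auto
qed

lemma Rc_mp: "bij \<pi> \<Longrightarrow> mp_map (bernoulli_shift p) (bernoulli_shift p) (Rc \<pi> m)"
  unfolding Rc_def by (intro rho_mp bij_Rc_perm)

lemma Rc_bij: "bij \<pi> \<Longrightarrow> bij (Rc \<pi> m)"
  unfolding Rc_def by (intro rho_bij bij_Rc_perm)

lemma Rc_inv: assumes "bij \<pi>" shows "the_inv_into UNIV (Rc \<pi> 1) = Rc \<pi> (-1)"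
proof
  fix y
  have "Rc \<pi> 1 (Rc \<pi> (-1) y) = y" using assms by (simp add: Rc_add Rc_0)
  then show "the_inv_into UNIV (Rc \<pi> 1) y = Rc \<pi> (-1) y"
    using Rc_bij[OF assms] by (metis bij_is_inj the_inv_f_f)
qed

lemma Rc_pow: assumes "bij \<pi>" shows "(Rc \<pi> s ^^ n) x = Rc \<pi> (s * int n) x"
  by (induction n) (simp_all add: assms Rc_0 Rc_add algebra_simps)

lemma ipow_Rc: assumes "bij \<pi>" shows "ipow (bernoulli_shift p) (Rc \<pi> 1) m = Rc \<pi> m"
proof
  fix x
  show "ipow (bernoulli_shift p) (Rc \<pi> 1) m x = Rc \<pi> m x"
  proof (cases "0 \<le> m")
    case True then show ?thesis by (simp add: ipow_def Rc_pow assms)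
  next
    case False then show ?thesis by (simp add: ipow_def Rc_inv assms Rc_pow[OF assms])
  qed
qed

lemma invertible_Rc: "bij \<pi> \<Longrightarrow> invertible_mpt (bernoulli_shift p) (Rc \<pi> 1)"
  unfolding invertible_mpt_def by (simp add: Rc_mp Rc_inv Rc_bij)

definition G :: "(int \<Rightarrow> nat) \<Rightarrow> (int \<Rightarrow> nat)" where
  "G x = (\<lambda>i. x (4*i) + 2 * x (4*i+1) + 4 * x (4*i+2) + 8 * x (4*i+3))"

definition Ginv :: "(int \<Rightarrow> nat) \<Rightarrow> (int \<Rightarrow> nat)" where
  "Ginv y = (\<lambda>j. (y (j div 4) div 2 ^ nat (j mod 4)) mod 2)"

definition p2 :: "nat pmf" where "p2 = pmf_of_set {0,1}"
definition p16 :: "nat pmf" where "p16 = pmf_of_set {0..<16}"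

lemma sixteen: assumes "(v::nat) < 16" shows "v mod 2 + 2 * (v div 2 mod 2) + 4 * (v div 4 mod 2) + 8 * (v div 8 mod 2) = v"
proof -
  have a: "v mod 4 = 2*(v div 2 mod 2) + v mod 2" using mod_mult2_eq[of v 2 2] by simp
  have b: "v mod 8 = 4*(v div 4 mod 2) + v mod 4" using mod_mult2_eq[of v 4 2] by simp
  have c: "v mod 16 = 8*(v div 8 mod 2) + v mod 8" using mod_mult2_eq[of v 8 2] by simp
  show ?thesis using a b c assms by simp
qed

lemma G_Ginv: "y i < 16 \<Longrightarrow> G (Ginv y) i = y i"
  unfolding G_def Ginv_def using sixteen[of "y i"] by simp

lemma bits: assumes "(b0::nat) \<le> 1" "b1 \<le> 1" "b2 \<le> 1" "b3 \<le> 1"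
  shows "(b0 + 2*b1 + 4*b2 + 8*b3) mod 2 = b0 \<and> (b0 + 2*b1 + 4*b2 + 8*b3) div 2 mod 2 = b1 \<and>
    (b0 + 2*b1 + 4*b2 + 8*b3) div 4 mod 2 = b2 \<and> (b0 + 2*b1 + 4*b2 + 8*b3) div 8 mod 2 = b3"
proof -
  have "b0 = 0 \<or> b0 = 1" "b1 = 0 \<or> b1 = 1" "b2 = 0 \<or> b2 = 1" "b3 = 0 \<or> b3 = 1" using assms by auto
  then show ?thesis by (elim disjE) simp_all
qed

lemma Ginv_G: assumes "\<And>k. x k \<le> 1" shows "Ginv (G x) j = x j"
proof -
  define i where "i = j div 4"
  have j: "j = 4*i + j mod 4" unfolding i_def by simp
  have "j mod 4 \<in> {0,1,2,3}" by auto
  then show ?thesis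
  proof (elim insertE)
    assume h: "j mod 4 = 0"
    then have "j = 4*i" using j by simp
    then show ?thesis unfolding Ginv_def G_def using bits[OF assms assms assms assms, of "4*i" "4*i+1" "4*i+2" "4*i+3"] by simp
  next
    assume h: "j mod 4 = 1"
    then have "j = 4*i+1" using j by simp
    then show ?thesis unfolding Ginv_def G_def using bits[OF assms assms assms assms, of "4*i" "4*i+1" "4*i+2" "4*i+3"] by simp
  next
    assume h: "j mod 4 = 2"
    then have "j = 4*i+2" using j by simp
    then show ?thesis unfolding Ginv_def G_def using bits[OF assms assms assms assms, of "4*i" "4*i+1" "4*i+2" "4*i+3"] by simp
  next
    assume h: "j mod 4 = 3"
    then have "j = 4*i+3" using j by simp
    then show ?thesis unfolding Ginv_def G_def using bits[OF assms assms assms assms, of "4*i" "4*i+1" "4*i+2" "4*i+3"] by simp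
  qed simp
qed

lemma sets_pmf_UNIV: "sets (measure_pmf p) = sets (count_space UNIV)"
  by simp

lemma G_measurable[measurable]: "G \<in> measurable (bernoulli_shift p) (bernoulli_shift q)"
proof -
  have "(\<lambda>x. x (4*i) + 2 * x (4*i+1) + 4 * x (4*i+2) + 8 * x (4*i+3)) \<in> measurable (bernoulli_shift p) (count_space UNIV)" for i
    unfolding bernoulli_shift_def by measurable
  then show ?thesis
    unfolding bernoulli_shift_def G_def
    by (intro measurable_PiM_single') (auto simp: space_PiM cong: measurable_cong_sets)
qed

lemma Ginv_measurable[measurable]: "Ginv \<in> measurable (bernoulli_shift p) (bernoulli_shift q)"
proof -
  have "(\<lambda>y. (y (j div 4) div 2 ^ nat (j mod 4)) mod 2) \<in> measurable (bernoulli_shift p) (count_space UNIV)" for j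
    unfolding bernoulli_shift_def by measurable
  then show ?thesis
    unfolding bernoulli_shift_def Ginv_def
    by (intro measurable_PiM_single') (auto simp: space_PiM cong: measurable_cong_sets)
qed

lemma divmod4: "0 \<le> k \<Longrightarrow> k < 4 \<Longrightarrow> (4*i + k) div 4 = (i::int) \<and> (4*i+k) mod 4 = k"
  by auto

lemma measure_p2: "v \<in> {0,1} \<Longrightarrow> emeasure (measure_pmf p2) {v} = ennreal (1/2)"
  unfolding p2_def by (subst measure_pmf.emeasure_eq_measure, subst measure_pmf_of_set) auto

lemma measure_p16: "emeasure (measure_pmf p16) B = ennreal (card ({0..<16} \<inter> B) / 16)"
  unfolding p16_def by (subst measure_pmf.emeasure_eq_measure, subst measure_pmf_of_set) auto

lemma AE_bits: "AE x in bernoulli_shift p2. \<forall>k. x k \<le> 1"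
proof -
  have "AE y in measure_pmf p2. y \<le> 1"
    unfolding p2_def by (subst AE_measure_pmf_iff) auto
  then show ?thesis
    unfolding bernoulli_shift_def
    by (subst AE_all_countable) (auto intro!: AE_PiM_component prob_space_measure_pmf)
qed

lemma K_eq: "{j::int. j div 4 \<in> J} = (\<lambda>(i,k). 4*i + k) ` (J \<times> {0..<4})"
proof (safe)
  fix j :: int assume "j div 4 \<in> J"
  then show "j \<in> (\<lambda>(i,k). 4*i + k) ` (J \<times> {0..<4})"
    by (intro image_eqI[of _ _ "(j div 4, j mod 4)"]) auto
qed (auto simp: divmod4)

lemma K_inj: "inj_on (\<lambda>(i,k). 4*i + (k::int)) (J \<times> {0..<4})"
  by (rule inj_onI) (auto dest: arg_cong[where f="\<lambda>x. (x div 4, x mod 4)"] simp: divmod4)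

lemma K_finite: "finite J \<Longrightarrow> finite {j::int. j div 4 \<in> J}"
  unfolding K_eq by auto

lemma K_card: "finite J \<Longrightarrow> card {j::int. j div 4 \<in> J} = 4 * card J"
  unfolding K_eq by (subst card_image[OF K_inj]) (simp add: card_cartesian_product)

lemma G_local: assumes "\<forall>j. j div 4 = i \<longrightarrow> x j = y j" shows "G x i = G y i"
  using assms unfolding G_def by (simp add: divmod4)

lemma G_distr: "distr (bernoulli_shift p2) (bernoulli_shift p16) G = bernoulli_shift p16"
proof (unfold bernoulli_shift_def[of p16], rule measure_eqI_PiM_infinite)
  show "finite_measure (distr (bernoulli_shift p2) (Pi\<^sub>M UNIV (\<lambda>_. measure_pmf p16)) G)"
  proof -
    have "prob_space (distr (bernoulli_shift p2) (Pi\<^sub>M UNIV (\<lambda>_. measure_pmf p16)) G)"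
      using G_measurable[of p2 p16] prob_space_bs[of p2]
      by (intro prob_space.prob_space_distr) (auto simp: bernoulli_shift_def)
    then show ?thesis by (simp add: prob_space_def)
  qed
next
  fix A :: "int \<Rightarrow> nat set" and J :: "int set"
  assume J: "finite J" "J \<subseteq> UNIV" and A: "\<And>i. i \<in> J \<Longrightarrow> A i \<in> sets (measure_pmf p16)"
  define E where "E = prod_emb UNIV (\<lambda>_. measure_pmf p16) J (Pi\<^sub>E J A)"
  define K where "K = {j::int. j div 4 \<in> J}"
  define C where "C = Pi\<^sub>E J (\<lambda>i. A i \<inter> {..<16})"
  define Cyl where "Cyl c = {x. \<forall>j\<in>K. x j = Ginv c j}" for c
  have finC: "finite C" unfolding C_def using J by (intro finite_PiE) auto
  have finK: "finite K" unfolding K_def using K_finite[OF J(1)] .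
  have Esets: "E \<in> sets (PiM UNIV (\<lambda>_. measure_pmf p16))"
    unfolding E_def using J A by (intro sets_PiM_I) auto
  have Eeq: "E = {y. \<forall>i\<in>J. y i \<in> A i}"
    unfolding E_def prod_emb_def by (auto simp: space_PiM PiE_iff)
  have GE: "G -` E = {x. \<forall>i\<in>J. G x i \<in> A i}" by (simp add: Eeq)
  have GEsets: "G -` E \<in> sets (bernoulli_shift p2)"
  proof -
    have "E \<in> sets (bernoulli_shift p16)" using Esets by (simp add: bernoulli_shift_def)
    from measurable_sets[OF G_measurable[of p2 p16] this] show ?thesis by simp
  qed
  have Cyl_emb: "Cyl c = prod_emb UNIV (\<lambda>_. measure_pmf p2) K (Pi\<^sub>E K (\<lambda>j. {Ginv c j}))" for c
    unfolding Cyl_def prod_emb_def by (auto simp: space_PiM PiE_iff)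
  have Cyl_sets: "Cyl c \<in> sets (bernoulli_shift p2)" for c
    unfolding Cyl_emb bernoulli_shift_def by (intro sets_PiM_I finK) auto
  have F1: "G x i = c i" if "x \<in> Cyl c" "c \<in> C" "i \<in> J" for x c i
  proof -
    have "G x i = G (Ginv c) i"
      using that by (intro G_local) (auto simp: Cyl_def K_def)
    also have "\<dots> = c i" using that by (intro G_Ginv) (auto simp: C_def)
    finally show ?thesis .
  qed
  have disj: "disjoint_family_on Cyl C"
    unfolding disjoint_family_on_def
  proof (intro ballI impI, safe)
    fix c d x assume "c \<in> C" "d \<in> C" "c \<noteq> d" "x \<in> Cyl c" "x \<in> Cyl d"
    then have "\<forall>i\<in>J. c i = d i" using F1 by metis
    then have "c = d" using \<open>c \<in> C\<close> \<open>d \<in> C\<close> unfolding C_def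
      by (intro extensionalityI[where A=J]) (auto simp: PiE_iff)
    then show "x \<in> {}" using \<open>c \<noteq> d\<close> by simp
  qed
  have AEeq: "AE x in bernoulli_shift p2. x \<in> G -` E \<longleftrightarrow> x \<in> (\<Union>c\<in>C. Cyl c)"
    using AE_bits
  proof eventually_elim
    fix x :: "int \<Rightarrow> nat" assume x: "\<forall>k. x k \<le> 1"
    show "x \<in> G -` E \<longleftrightarrow> x \<in> (\<Union>c\<in>C. Cyl c)"
    proof
      assume "x \<in> G -` E"
      then have xA: "\<forall>i\<in>J. G x i \<in> A i" by (simp add: GE)
      define c where "c = restrict (G x) J"
      have "G x i < 16" for i
        using x[rule_format, of "4*i"] x[rule_format, of "4*i+1"] x[rule_format, of "4*i+2"] x[rule_format, of "4*i+3"]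
        by (simp add: G_def)
      then have "c \<in> C" using xA by (auto simp: C_def c_def)
      moreover have "x \<in> Cyl c"
        unfolding Cyl_def
      proof (intro CollectI ballI)
        fix j assume "j \<in> K"
        then have "Ginv c j = Ginv (G x) j" by (simp add: Ginv_def c_def K_def)
        then show "x j = Ginv c j" using Ginv_G[of x j] x by simp
      qed
      ultimately show "x \<in> (\<Union>c\<in>C. Cyl c)" by auto
    next
      assume "x \<in> (\<Union>c\<in>C. Cyl c)"
      then obtain c where "c \<in> C" "x \<in> Cyl c" by auto
      then show "x \<in> G -` E" using F1 by (auto simp: GE C_def PiE_iff)
    qed
  qed
  have "emeasure (distr (bernoulli_shift p2) (Pi\<^sub>M UNIV (\<lambda>_. measure_pmf p16)) G) E
      = emeasure (bernoulli_shift p2) (G -` E)"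
    using G_measurable[of p2 p16] Esets
    by (subst emeasure_distr) (auto simp: bernoulli_shift_def)
  also have "\<dots> = emeasure (bernoulli_shift p2) (\<Union>c\<in>C. Cyl c)"
    using AEeq GEsets Cyl_sets J finC by (intro emeasure_eq_AE sets.finite_UN) auto
  also have "\<dots> = (\<Sum>c\<in>C. emeasure (bernoulli_shift p2) (Cyl c))"
    using disj Cyl_sets finC by (intro sum_emeasure[symmetric]) auto
  also have "\<dots> = (\<Sum>c\<in>C. ennreal ((1/2) ^ card K))"
  proof (rule sum.cong[OF refl])
    fix c assume "c \<in> C"
    have "emeasure (bernoulli_shift p2) (Cyl c) = (\<Prod>j\<in>K. emeasure (measure_pmf p2) {Ginv c j})"
      unfolding Cyl_emb bernoulli_shift_def
      by (intro emeasure_PiM_emb prob_space_measure_pmf finK) auto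
    also have "\<dots> = (\<Prod>j\<in>K. ennreal (1/2))"
      by (intro prod.cong refl measure_p2) (auto simp: Ginv_def)
    also have "\<dots> = ennreal ((1/2) ^ card K)"
      by (subst prod_constant, rule ennreal_power) simp
    finally show "emeasure (bernoulli_shift p2) (Cyl c) = ennreal ((1/2) ^ card K)" .
  qed
  also have "\<dots> = ennreal (real (card C) * (1/2) ^ card K)"
    by (simp only: sum_constant ennreal_of_nat_eq_real_of_nat ennreal_mult'[symmetric])
  also have "real (card C) * (1/2) ^ card K = (\<Prod>i\<in>J. real (card ({0..<16} \<inter> A i)) / 16)"
  proof -
    have "card C = (\<Prod>i\<in>J. card ({0..<16} \<inter> A i))"
      unfolding C_def using J by (subst card_PiE) (auto intro!: prod.cong simp: lessThan_atLeast0 Int_commute)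
    moreover have "((1/2::real) ^ card K) = (1/16) ^ card J"
    proof -
      have "(1/2::real)^4 = 1/16" by (simp add: power_divide)
      then show ?thesis unfolding K_def K_card[OF J(1)] power_mult by metis
    qed
    moreover have "(\<Prod>i\<in>J. real (card ({0..<16} \<inter> A i)) / 16) = (\<Prod>i\<in>J. real (card ({0..<16} \<inter> A i))) * (1/16) ^ card J"
      by (simp add: prod_dividef power_one_over)
    ultimately show ?thesis by simp
  qed
  also have "ennreal (\<Prod>i\<in>J. real (card ({0..<16} \<inter> A i)) / 16) = (\<Prod>i\<in>J. emeasure (measure_pmf p16) (A i))"
    by (simp add: measure_p16 prod_ennreal)
  also have "\<dots> = emeasure (Pi\<^sub>M UNIV (\<lambda>_. measure_pmf p16)) E"
    unfolding E_def using J A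
    by (intro emeasure_PiM_emb[symmetric] prob_space_measure_pmf) auto
  finally show "emeasure (distr (bernoulli_shift p2) (Pi\<^sub>M UNIV (\<lambda>_. measure_pmf p16)) G)
          (prod_emb UNIV (\<lambda>_. measure_pmf p16) J (Pi\<^sub>E J A)) =
         emeasure (Pi\<^sub>M UNIV (\<lambda>_. measure_pmf p16)) (prod_emb UNIV (\<lambda>_. measure_pmf p16) J (Pi\<^sub>E J A))"
    unfolding E_def .
qed (simp_all add: bernoulli_shift_def)

lemma mp_iso_gen:
  assumes phi: "\<phi> \<in> measurable M N" and psi: "\<psi> \<in> measurable N M" and d: "distr M N \<phi> = N"
    and X0: "X0 \<in> sets M" and Y0: "Y0 \<in> sets N" and null: "emeasure M (space M - X0) = 0"
    and bij: "bij_betw \<phi> X0 Y0" and inv: "\<And>x. x \<in> X0 \<Longrightarrow> \<psi> (\<phi> x) = x"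
  shows "mp_map (restrict_space M X0) (restrict_space N Y0) \<phi> \<and>
         mp_map (restrict_space N Y0) (restrict_space M X0) (the_inv_into X0 \<phi>)"
proof -
  have X0s: "X0 \<subseteq> space M" using X0 sets.sets_into_space by auto
  have Y0s: "Y0 \<subseteq> space N" using Y0 sets.sets_into_space by auto
  have hX: "X0 \<inter> space M \<in> sets M" using X0 X0s by (simp add: Int_absorb2)
  have hY: "Y0 \<inter> space N \<in> sets N" using Y0 Y0s by (simp add: Int_absorb2)
  have spX: "space (restrict_space M X0) = X0" using X0 by simp
  have spY: "space (restrict_space N Y0) = Y0" using Y0 by simp
  have phiXY: "\<phi> \<in> X0 \<rightarrow> Y0" using bij by (auto simp: bij_betw_def)
  have psiYX: "\<psi> \<in> Y0 \<rightarrow> X0" using bij inv by (auto simp: bij_betw_def)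
  have AEX: "AE x in M. x \<in> X0"
    using null X0 by (subst AE_iff_measurable[of "space M - X0"]) auto
  have fwd: "mp_map (restrict_space M X0) (restrict_space N Y0) \<phi>"
    unfolding mp_map_def
  proof (intro conjI ballI)
    show "\<phi> \<in> measurable (restrict_space M X0) (restrict_space N Y0)"
      by (intro measurable_restrict_space3 phi phiXY)
    fix A assume "A \<in> sets (restrict_space N Y0)"
    then have A: "A \<in> sets N" "A \<subseteq> Y0"
      using sets_restrict_space_iff[OF hY] by blast+
    have s1: "\<phi> -` A \<inter> space M \<in> sets M" using measurable_sets[OF phi A(1)] .
    have "emeasure (restrict_space M X0) (\<phi> -` A \<inter> space (restrict_space M X0)) = emeasure M (\<phi> -` A \<inter> X0)"
      unfolding spX by (rule emeasure_restrict_space[OF hX]) simp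
    also have "\<dots> = emeasure M (\<phi> -` A \<inter> space M)"
    proof (rule emeasure_eq_AE)
      show "AE x in M. (x \<in> \<phi> -` A \<inter> X0) = (x \<in> \<phi> -` A \<inter> space M)"
        using AEX by eventually_elim (use X0s in auto)
      have "\<phi> -` A \<inter> X0 = (\<phi> -` A \<inter> space M) \<inter> X0" using X0s by blast
      then show "\<phi> -` A \<inter> X0 \<in> sets M" using s1 X0 by simp
    qed (rule s1)
    also have "\<dots> = emeasure N A" using emeasure_distr[OF phi A(1)] d by simp
    also have "\<dots> = emeasure (restrict_space N Y0) A"
      by (rule emeasure_restrict_space[OF hY A(2), symmetric])
    finally show "emeasure (restrict_space M X0) (\<phi> -` A \<inter> space (restrict_space M X0)) = emeasure (restrict_space N Y0) A" .
  qed
  have tinv: "the_inv_into X0 \<phi> y = \<psi> y" if yY: "y \<in> Y0" for y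
  proof -
    obtain x where x: "x \<in> X0" "y = \<phi> x" using bij yY by (auto simp: bij_betw_def)
    then show ?thesis using inv bij by (simp add: bij_betw_def the_inv_into_f_f)
  qed
  have bwd: "mp_map (restrict_space N Y0) (restrict_space M X0) (the_inv_into X0 \<phi>)"
    unfolding mp_map_def
  proof (intro conjI ballI)
    have "\<psi> \<in> measurable (restrict_space N Y0) (restrict_space M X0)"
      by (intro measurable_restrict_space3 psi psiYX)
    then show m: "the_inv_into X0 \<phi> \<in> measurable (restrict_space N Y0) (restrict_space M X0)"
      by (rule measurable_cong[THEN iffD1, rotated]) (simp add: spY tinv)
    fix A assume A: "A \<in> sets (restrict_space M X0)"
    then have A': "A \<in> sets M" "A \<subseteq> X0"
      using sets_restrict_space_iff[OF hX] by blast+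
    define B where "B = the_inv_into X0 \<phi> -` A \<inter> space (restrict_space N Y0)"
    have B: "B \<in> sets (restrict_space N Y0)" unfolding B_def using measurable_sets[OF m A] .
    have "\<phi> -` B \<inter> space (restrict_space M X0) = A"
      unfolding B_def spX spY using A'(2) phiXY inv tinv
      by (auto simp: Pi_iff)
    then show "emeasure (restrict_space N Y0) (the_inv_into X0 \<phi> -` A \<inter> space (restrict_space N Y0)) = emeasure (restrict_space M X0) A"
      using fwd B unfolding mp_map_def B_def by metis
  qed
  from fwd bwd show ?thesis by simp
qed

lemma X0_sets: "{x::int\<Rightarrow>nat. \<forall>k. x k \<le> 1} \<in> sets (bernoulli_shift p)"
proof -
  have "{x::int\<Rightarrow>nat. \<forall>k. x k \<le> 1} = (\<Inter>k. {x. x k \<in> {..1}})" by auto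
  also have "\<dots> \<in> sets (bernoulli_shift p)"
  proof -
    have "{x. x k \<in> {..1}} \<in> sets (bernoulli_shift p)" for k :: int
    proof -
      have "(\<lambda>x. x k) \<in> measurable (bernoulli_shift p) (measure_pmf p)"
        unfolding bernoulli_shift_def by (rule measurable_component_singleton) simp
      from measurable_sets[OF this, of "{..1}"] show ?thesis
        by (simp add: vimage_def)
    qed
    then show ?thesis by (intro sets.countable_INT) auto
  qed
  finally show ?thesis .
qed

lemma Y0_sets: "{x::int\<Rightarrow>nat. \<forall>k. x k < 16} \<in> sets (bernoulli_shift p)"
proof -
  have "{x::int\<Rightarrow>nat. \<forall>k. x k < 16} = (\<Inter>k. {x. x k \<in> {..<16}})" by auto
  also have "\<dots> \<in> sets (bernoulli_shift p)"
  proof -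
    have "{x. x k \<in> {..<16}} \<in> sets (bernoulli_shift p)" for k :: int
    proof -
      have "(\<lambda>x. x k) \<in> measurable (bernoulli_shift p) (measure_pmf p)"
        unfolding bernoulli_shift_def by (rule measurable_component_singleton) simp
      from measurable_sets[OF this, of "{..<16}"] show ?thesis
        by (simp add: vimage_def)
    qed
    then show ?thesis by (intro sets.countable_INT) auto
  qed
  finally show ?thesis .
qed

lemma AE_16: "AE x in bernoulli_shift p16. \<forall>k. x k < 16"
proof -
  have "AE y in measure_pmf p16. y < 16"
    unfolding p16_def by (subst AE_measure_pmf_iff) auto
  then show ?thesis
    unfolding bernoulli_shift_def
    by (subst AE_all_countable) (auto intro!: AE_PiM_component prob_space_measure_pmf)
qed

lemma null_of_AE:
  assumes "AE x in M. x \<in> X" "X \<in> sets M" shows "emeasure M (space M - X) = 0"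
  using assms by (subst AE_iff_measurable[symmetric, where P="\<lambda>x. x \<in> X"]) auto

lemma bernoulli_Rc: assumes pi: "bij \<pi>" shows "bernoulli (bernoulli_shift p2) (Rc \<pi> 1)"
  unfolding bernoulli_def
proof (intro conjI exI[of _ p16] invertible_Rc pi)
  show "finite (set_pmf p16)" unfolding p16_def by simp
  define X0 where "X0 = {x::int\<Rightarrow>nat. \<forall>k. x k \<le> 1}"
  define Y0 where "Y0 = {x::int\<Rightarrow>nat. \<forall>k. x k < 16}"
  define \<phi> where "\<phi> = (\<lambda>x. G (rho \<pi> x))"
  define \<psi> where "\<psi> = (\<lambda>y. rho (inv \<pi>) (Ginv y))"
  have X0: "X0 \<in> sets (bernoulli_shift p2)" unfolding X0_def by (rule X0_sets)
  have Y0: "Y0 \<in> sets (bernoulli_shift p16)" unfolding Y0_def by (rule Y0_sets)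
  have nullX: "emeasure (bernoulli_shift p2) (space (bernoulli_shift p2) - X0) = 0"
    using AE_bits X0 unfolding X0_def by (intro null_of_AE) auto
  have nullY: "emeasure (bernoulli_shift p16) (space (bernoulli_shift p16) - Y0) = 0"
    using AE_16 Y0 unfolding Y0_def by (intro null_of_AE) auto
  have phim: "\<phi> \<in> measurable (bernoulli_shift p2) (bernoulli_shift p16)"
    unfolding \<phi>_def using G_measurable rho_measurable by (rule measurable_compose[rotated])
  have psim: "\<psi> \<in> measurable (bernoulli_shift p16) (bernoulli_shift p2)"
    unfolding \<psi>_def using Ginv_measurable rho_measurable by (rule measurable_compose)
  have d: "distr (bernoulli_shift p2) (bernoulli_shift p16) \<phi> = bernoulli_shift p16"
  proof -
    have "distr (bernoulli_shift p2) (bernoulli_shift p16) \<phi>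
        = distr (distr (bernoulli_shift p2) (bernoulli_shift p2) (rho \<pi>)) (bernoulli_shift p16) G"
      unfolding \<phi>_def by (subst distr_distr) (auto simp: o_def)
    also have "\<dots> = bernoulli_shift p16" by (simp add: rho_distr pi G_distr)
    finally show ?thesis .
  qed
  have rhoX: "rho \<sigma> x \<in> X0" if "x \<in> X0" for x \<sigma> using that by (simp add: X0_def rho_def)
  have GY: "G x \<in> Y0" if "x \<in> X0" for x
  proof -
    have "G x i < 16" for i
      using that[unfolded X0_def, simplified, rule_format, of "4*i"] that[unfolded X0_def, simplified, rule_format, of "4*i+1"]
        that[unfolded X0_def, simplified, rule_format, of "4*i+2"] that[unfolded X0_def, simplified, rule_format, of "4*i+3"]
      by (simp add: G_def)
    then show ?thesis by (simp add: Y0_def)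
  qed
  have m2: "(a::nat) mod 2 \<le> 1" for a by presburger
  have GinvX: "Ginv y \<in> X0" for y unfolding X0_def Ginv_def using m2 by blast
  have inv1: "\<psi> (\<phi> x) = x" if "x \<in> X0" for x
  proof -
    have "Ginv (G (rho \<pi> x)) = rho \<pi> x"
      using rhoX[OF that] by (intro ext Ginv_G) (simp add: X0_def)
    then show ?thesis unfolding \<psi>_def \<phi>_def
      using pi by (simp add: rho_comp surj_iff[THEN iffD1, OF bij_is_surj] rho_id)
  qed
  have inv2: "\<phi> (\<psi> y) = y" if "y \<in> Y0" for y
  proof -
    have "rho \<pi> (rho (inv \<pi>) (Ginv y)) = Ginv y"
      using pi by (simp add: rho_comp bij_is_inj[THEN inv_o_cancel] rho_id)
    moreover have "G (Ginv y) = y" using that by (intro ext G_Ginv) (simp add: Y0_def)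
    ultimately show ?thesis unfolding \<psi>_def \<phi>_def by simp
  qed
  have bij: "bij_betw \<phi> X0 Y0"
    by (rule bij_betwI[where g=\<psi>]) (auto simp: \<phi>_def \<psi>_def rhoX GY GinvX inv1[unfolded \<phi>_def \<psi>_def] inv2[unfolded \<phi>_def \<psi>_def])
  have iso: "mp_map (restrict_space (bernoulli_shift p2) X0) (restrict_space (bernoulli_shift p16) Y0) \<phi> \<and>
         mp_map (restrict_space (bernoulli_shift p16) Y0) (restrict_space (bernoulli_shift p2) X0) (the_inv_into X0 \<phi>)"
    apply (rule mp_iso_gen[where \<psi>=\<psi>])
    apply (rule phim)
    apply (rule psim)
    apply (rule d)
    apply (rule X0)
    apply (rule Y0)
    apply (rule nullX)
    apply (rule bij)
    apply (erule inv1)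
    done
  have comm: "\<phi> (Rc \<pi> 1 x) = shift (\<phi> x)" for x
  proof -
    have "rho \<pi> (Rc \<pi> 1 x) = (\<lambda>j. rho \<pi> x (j + 4))"
      using pi by (simp add: rho_def Rc_apply fun_eq_iff bij_is_inj)
    then show ?thesis unfolding \<phi>_def by (simp add: G_def shift_def algebra_simps)
  qed
  have TX: "Rc \<pi> 1 ` X0 \<subseteq> X0" unfolding Rc_def using rhoX by auto
  have SY: "shift ` Y0 \<subseteq> Y0" by (auto simp: Y0_def shift_def)
  show "mpt_iso (bernoulli_shift p2) (Rc \<pi> 1) (bernoulli_shift p16) shift"
    unfolding mpt_iso_def
    by (intro exI[of _ X0] exI[of _ Y0] exI[of _ \<phi>] conjI X0 Y0 nullX nullY TX SY bij iso[THEN conjunct1] iso[THEN conjunct2] ballI comm)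
qed

lemma extend_bij:
  fixes d r :: "'k \<Rightarrow> int"
  assumes d: "inj_on d K" and r: "inj_on r K"
    and id: "infinite (- (d ` K))" and ir: "infinite (- (r ` K))"
  shows "\<exists>\<pi>. bij \<pi> \<and> (\<forall>k\<in>K. \<pi> (d k) = r k)"
proof -
  obtain e1 :: "int \<Rightarrow> nat" where e1: "bij_betw e1 (- (d ` K)) UNIV"
    using countableE_infinite[OF _ id] by blast
  obtain e2 :: "int \<Rightarrow> nat" where e2: "bij_betw e2 (- (r ` K)) UNIV"
    using countableE_infinite[OF _ ir] by blast
  define g where "g = inv_into (- (r ` K)) e2 \<circ> e1"
  have g: "bij_betw g (- (d ` K)) (- (r ` K))"
    unfolding g_def using e1 bij_betw_inv_into[OF e2] by (rule bij_betw_trans)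
  define h where "h = r \<circ> the_inv_into K d"
  have h: "bij_betw h (d ` K) (r ` K)"
    unfolding h_def using bij_betw_the_inv_into[OF inj_on_imp_bij_betw[OF d]] r
    by (intro bij_betw_trans) (auto simp: inj_on_imp_bij_betw)
  define \<pi> where "\<pi> x = (if x \<in> d ` K then h x else g x)" for x
  have "bij_betw \<pi> (d ` K \<union> - (d ` K)) (r ` K \<union> - (r ` K))"
  proof (rule bij_betw_combine)
    show "bij_betw \<pi> (d ` K) (r ` K)" using h by (rule bij_betw_cong[THEN iffD1, rotated]) (simp add: \<pi>_def)
    show "bij_betw \<pi> (- (d ` K)) (- (r ` K))" using g by (rule bij_betw_cong[THEN iffD1, rotated]) (simp add: \<pi>_def)
  qed auto
  then have "bij \<pi>" by simp
  moreover have "\<pi> (d k) = r k" if "k \<in> K" for k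
    using that d by (simp add: \<pi>_def h_def the_inv_into_f_f)
  ultimately show ?thesis by blast
qed

lemma sum_split1: fixes m n :: nat shows "m \<le> n \<Longrightarrow> (\<Sum>i=1..n. f i) = (\<Sum>i=1..m. f i) + (\<Sum>i\<in>{m<..n}. (f i :: real))"
proof -
  assume "m \<le> n"
  then have "{1..n} = {1..m} \<union> {m<..n}" by auto
  then show ?thesis by (simp add: sum.union_disjoint ivl_disj_int)
qed

lemma dens:
  fixes t :: "nat \<Rightarrow> real"
  assumes t: "\<And>n. t n = (if \<exists>k. 4^k < n \<and> n \<le> 2*4^k then 1/2 else 1/4)"
  shows "\<not> convergent (\<lambda>N. (\<Sum>n=1..N. t n) / real N)"
proof
  define s where "s N = (\<Sum>n=1..N. t n)" for N
  assume "convergent (\<lambda>N. (\<Sum>n=1..N. t n) / real N)"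
  then obtain L where L: "(\<lambda>N. s N / real N) \<longlonglongrightarrow> L" unfolding convergent_def s_def by blast
  have A: "s (2*4^k) = s (4^k) + 4^k/2" for k
  proof -
    have "s (2*4^k) = s (4^k) + (\<Sum>n\<in>{4^k<..2*4^k}. t n)" unfolding s_def by (rule sum_split1) simp
    also have "(\<Sum>n\<in>{4^k<..2*4^k}. t n) = (\<Sum>n\<in>{4^k<..2*4^k::nat}. 1/2)"
      by (rule sum.cong[OF refl]) (auto simp: t)
    also have "\<dots> = 4^k/2" by simp
    finally show ?thesis .
  qed
  have B: "s (4^Suc k) = s (2*4^k) + 4^k/2" for k
  proof -
    have "s (4^Suc k) = s (2*4^k) + (\<Sum>n\<in>{2*4^k<..4^Suc k}. t n)" unfolding s_def by (rule sum_split1) simp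
    also have "(\<Sum>n\<in>{2*4^k<..4^Suc k}. t n) = (\<Sum>n\<in>{2*4^k<..4^Suc k::nat}. 1/4)"
    proof (rule sum.cong[OF refl])
      fix n :: nat assume n: "n \<in> {2*4^k<..4^Suc k}"
      have "\<not> (4^j < n \<and> n \<le> 2*4^j)" for j :: nat
      proof (cases "j \<le> k")
        case True
        then have "(4::nat)^j \<le> 4^k" by (rule power_increasing) simp
        then show ?thesis using n by (simp del: power_increasing_iff)
      next
        case False
        then have "(4::nat)^Suc k \<le> 4^j" by (intro power_increasing) auto
        then show ?thesis using n by (simp del: power_increasing_iff power_Suc)
      qed
      then show "t n = 1/4" by (simp add: t)
    qed
    also have "\<dots> = 4^k/2" by simp
    finally show ?thesis .
  qed
  define u where "u k = s (4^k) / 4^k" for k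
  define v where "v k = s (2*4^k) / (2*4^k)" for k
  have vu: "v k = u k / 2 + 1/4" for k unfolding u_def v_def A by (simp add: field_simps)
  have uv: "u (Suc k) = v k / 2 + 1/8" for k unfolding u_def v_def B by (simp add: field_simps)
  have sm1: "strict_mono (\<lambda>k::nat. (4::nat)^k)" by (rule strict_monoI) simp
  have sm2: "strict_mono (\<lambda>k::nat. 2*(4::nat)^k)" by (rule strict_monoI) simp
  have "(\<lambda>k. s (4^k) / real (4^k)) \<longlonglongrightarrow> L" using LIMSEQ_subseq_LIMSEQ[OF L sm1] by (simp add: o_def)
  then have uL: "u \<longlonglongrightarrow> L" unfolding u_def by simp
  have "(\<lambda>k. s (2*4^k) / real (2*4^k)) \<longlonglongrightarrow> L" using LIMSEQ_subseq_LIMSEQ[OF L sm2] by (simp add: o_def)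
  then have vL: "v \<longlonglongrightarrow> L" unfolding v_def by simp
  have "v \<longlonglongrightarrow> L/2 + 1/4" unfolding vu by (intro tendsto_intros uL) simp
  then have L1: "L = L/2 + 1/4" using vL LIMSEQ_unique by blast
  have "(\<lambda>k. u (Suc k)) \<longlonglongrightarrow> L/2 + 1/8" unfolding uv by (intro tendsto_intros vL) simp
  moreover have "(\<lambda>k. u (Suc k)) \<longlonglongrightarrow> L" using uL by (rule LIMSEQ_Suc)
  ultimately have L2: "L = L/2 + 1/8" using LIMSEQ_unique by blast
  from L1 L2 show False by simp
qed

lemma meas_cyl:
  assumes J: "finite J" and c: "\<And>j. j \<in> J \<Longrightarrow> c j \<in> {0,1}"
  shows "{x. \<forall>j\<in>J. x j = c j} \<in> sets (bernoulli_shift p2)"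
    "measure (bernoulli_shift p2) {x. \<forall>j\<in>J. x j = c j} = (1/2) ^ card J"
proof -
  have eq: "{x. \<forall>j\<in>J. x j = c j} = prod_emb UNIV (\<lambda>_. measure_pmf p2) J (Pi\<^sub>E J (\<lambda>j. {c j}))"
    unfolding prod_emb_def by (auto simp: space_PiM PiE_iff)
  show "{x. \<forall>j\<in>J. x j = c j} \<in> sets (bernoulli_shift p2)"
    unfolding eq bernoulli_shift_def using J by (intro sets_PiM_I) auto
  have "emeasure (bernoulli_shift p2) {x. \<forall>j\<in>J. x j = c j} = (\<Prod>j\<in>J. emeasure (measure_pmf p2) {c j})"
    unfolding eq bernoulli_shift_def using J by (intro emeasure_PiM_emb prob_space_measure_pmf) auto
  also have "\<dots> = (\<Prod>j\<in>J. ennreal (1/2))"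
    by (intro prod.cong refl measure_p2 c)
  also have "\<dots> = ennreal ((1/2) ^ card J)"
    by (subst prod_constant, rule ennreal_power) simp
  finally show "measure (bernoulli_shift p2) {x. \<forall>j\<in>J. x j = c j} = (1/2) ^ card J"
    by (simp add: measure_def)
qed

lemma mod4_facts:
  fixes x y :: int
  shows "4*x \<noteq> 4*y+1" "4*x \<noteq> 4*y+2" "4*x+1 \<noteq> 4*y+2" "4*x \<noteq> 4*y+3" "4*x+1 \<noteq> 4*y+3" "4*x+2 \<noteq> 4*y+3"
    "4*x \<noteq> 1" "4*x+1 \<noteq> 0" "4*x+2 \<noteq> 0" "4*x+2 \<noteq> 1" "4*x+3 \<noteq> 0" "4*x+3 \<noteq> 1"
    "4*x = 0 \<longleftrightarrow> x = 0" "4*x+1 = 1 \<longleftrightarrow> x = 0"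
    "4*x = 4*y \<longleftrightarrow> x = y" "4*x+1 = 4*y+1 \<longleftrightarrow> x = y" "4*x+2 = 4*y+2 \<longleftrightarrow> x = y"
  by presburger+

lemma nz4: "(x::int) \<noteq> 0 \<Longrightarrow> 4*x \<noteq> 0 \<and> 4*x \<noteq> 1 \<and> 4*x+1 \<noteq> 0 \<and> 4*x+1 \<noteq> 1 \<and> 4*x+2 \<noteq> 0 \<and> 4*x+2 \<noteq> 1"
  by presburger

lemma exists_pi:
  fixes a b :: "nat \<Rightarrow> int" and P :: "nat \<Rightarrow> bool"
  assumes ia: "inj_on a {1..}" and ib: "inj_on b {1..}" and a0: "\<forall>n\<ge>1. a n \<noteq> 0" and b0: "\<forall>n\<ge>1. b n \<noteq> 0"
  shows "\<exists>\<pi>. bij \<pi> \<and> \<pi> 0 = 0 \<and> \<pi> 1 = 1 \<and> (\<forall>n\<ge>1. \<pi> (4*b n) = 4*a n + 1) \<and>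
     (\<forall>n\<ge>1. \<pi> (4*b n + 1) = (if P n then 4*a n else 4*a n + 2))"
proof -
  define K :: "(nat \<times> nat) set" where "K = {(0,0),(0,1)} \<union> {1,2} \<times> {1..}"
  define d where "d = (\<lambda>(i::nat,n). if i = 0 then int n else if i = 1 then 4 * b n else 4 * b n + 1)"
  define r where "r = (\<lambda>(i::nat,n). if i = 0 then int n else if i = 1 then 4 * a n + 1
       else if P n then 4 * a n else 4 * a n + 2)"
  have bI: "b n = b m \<Longrightarrow> n \<ge> 1 \<Longrightarrow> m \<ge> 1 \<Longrightarrow> n = m" for n m using ib by (auto dest: inj_onD)
  have aI: "a n = a m \<Longrightarrow> n \<ge> 1 \<Longrightarrow> m \<ge> 1 \<Longrightarrow> n = m" for n m using ia by (auto dest: inj_onD)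
  have dm4: "(4*x) mod 4 = 0" "(4*x) div 4 = x" "(4*x+1) mod 4 = 1" "(4*x+1) div 4 = x"
    "(4*x+2) mod 4 = 2" "(4*x+2) div 4 = x" "(4*x+3) mod 4 = 3" for x :: int
    by presburger+
  define ib' where "ib' = the_inv_into {1..} b"
  define ia' where "ia' = the_inv_into {1..} a"
  have ibb: "ib' (b n) = n" if "n \<ge> 1" for n using that ib unfolding ib'_def by (simp add: the_inv_into_f_f)
  have iaa: "ia' (a n) = n" if "n \<ge> 1" for n using that ia unfolding ia'_def by (simp add: the_inv_into_f_f)
  define dd where "dd z = (if z = 0 \<or> z = 1 then (0::nat, nat z) else if z mod 4 = 0 then (1, ib' (z div 4)) else (2, ib' (z div 4)))" for z :: int
  define rd where "rd z = (if z = 0 \<or> z = 1 then (0::nat, nat z) else if z mod 4 = 1 then (1, ia' (z div 4)) else (2, ia' (z div 4)))" for z :: int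
  have dinj: "inj_on d K"
  proof (rule inj_on_inverseI[where g=dd])
    fix u assume u: "u \<in> K"
    then consider "u = (0,0)" | "u = (0,1)" | n where "n \<ge> 1" "u = (1,n)" | n where "n \<ge> 1" "u = (2,n)"
      unfolding K_def by auto
    then show "dd (d u) = u"
    proof cases
      case 1 then show ?thesis by (simp add: dd_def d_def)
    next
      case 2 then show ?thesis by (simp add: dd_def d_def)
    next
      case (3 n)
      have "4 * b n \<noteq> 0" "4 * b n \<noteq> 1" using nz4[of "b n"] b0 3 by auto
      then show ?thesis using 3 by (simp add: dd_def d_def dm4 ibb)
    next
      case (4 n)
      have "4 * b n + 1 \<noteq> 0" "4 * b n + 1 \<noteq> 1" using nz4[of "b n"] b0 4 by auto
      then show ?thesis using 4 by (simp add: dd_def d_def dm4 ibb)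
    qed
  qed
  have rinj: "inj_on r K"
  proof (rule inj_on_inverseI[where g=rd])
    fix u assume u: "u \<in> K"
    then consider "u = (0,0)" | "u = (0,1)" | n where "n \<ge> 1" "u = (1,n)" | n where "n \<ge> 1" "u = (2,n)"
      unfolding K_def by auto
    then show "rd (r u) = u"
    proof cases
      case 1 then show ?thesis by (simp add: rd_def r_def)
    next
      case 2 then show ?thesis by (simp add: rd_def r_def)
    next
      case (3 n)
      have "4 * a n + 1 \<noteq> 0" "4 * a n + 1 \<noteq> 1" using nz4[of "a n"] a0 3 by auto
      then show ?thesis using 3 by (simp add: rd_def r_def dm4 iaa)
    next
      case (4 n)
      have "4 * a n \<noteq> 0" "4 * a n \<noteq> 1" "4 * a n + 2 \<noteq> 0" "4 * a n + 2 \<noteq> 1" using nz4[of "a n"] a0 4 by auto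
      then show ?thesis using 4 by (simp add: rd_def r_def dm4 iaa)
    qed
  qed
  have inf3: "infinite (range (\<lambda>k::int. 4*k+3))"
  proof
    assume "finite (range (\<lambda>k::int. 4*k+3))"
    moreover have "inj (\<lambda>k::int. 4*k+3)" by (auto simp: inj_def)
    ultimately have "finite (UNIV :: int set)" by (rule finite_imageD)
    then show False by (simp add: infinite_UNIV_int)
  qed
  have "range (\<lambda>k::int. 4*k+3) \<subseteq> - (d ` K)"
  proof safe
    fix k u assume "u \<in> K" "4*k+3 = d u"
    then have "(4*k+3) mod 4 = d u mod 4" by simp
    then show False using \<open>u \<in> K\<close> by (auto simp: K_def d_def dm4)
  qed
  then have infd: "infinite (- (d ` K))" using inf3 finite_subset by blast
  have "range (\<lambda>k::int. 4*k+3) \<subseteq> - (r ` K)"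
  proof safe
    fix k u assume "u \<in> K" "4*k+3 = r u"
    then have "(4*k+3) mod 4 = r u mod 4" by simp
    then show False using \<open>u \<in> K\<close> by (auto simp: K_def r_def dm4 split: if_splits)
  qed
  then have infr: "infinite (- (r ` K))" using inf3 finite_subset by blast
  obtain \<pi> where pi: "bij \<pi>" "\<forall>k\<in>K. \<pi> (d k) = r k"
    using extend_bij[OF dinj rinj infd infr] by blast
  have "\<pi> 0 = 0" using pi(2)[rule_format, of "(0,0)"] by (simp add: K_def d_def r_def)
  moreover have "\<pi> 1 = 1" using pi(2)[rule_format, of "(0,1)"] by (simp add: K_def d_def r_def)
  moreover have "\<forall>n\<ge>1. \<pi> (4*b n) = 4*a n + 1"
    using pi(2) by (auto simp: K_def d_def r_def)
  moreover have "\<forall>n\<ge>1. \<pi> (4*b n + 1) = (if P n then 4*a n else 4*a n + 2)"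
  proof (intro allI impI)
    fix n :: nat assume "n \<ge> 1"
    then show "\<pi> (4*b n + 1) = (if P n then 4*a n else 4*a n + 2)"
      using pi(2)[rule_format, of "(2,n)"] by (simp add: K_def d_def r_def)
  qed
  ultimately show ?thesis using pi(1) by blast
qed

theorem theorem1p7:
  fixes a b :: "nat \<Rightarrow> int"
  assumes "inj_on a {1..}" and "inj_on b {1..}"
    and "\<forall>n\<ge>1. a n \<noteq> 0" and "\<forall>n\<ge>1. b n \<noteq> 0"
  shows "\<exists>(M :: (int \<Rightarrow> nat) measure) T S.
    prob_space M \<and> bernoulli M T \<and> bernoulli M S \<and>
    (\<exists>f g :: (int \<Rightarrow> nat) \<Rightarrow> real.
       f \<in> borel_measurable M \<and> g \<in> borel_measurable M \<and>
       (\<exists>C. AE x in M. \<bar>f x\<bar> \<le> C) \<and> (\<exists>C. AE x in M. \<bar>g x\<bar> \<le> C) \<and>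
       \<not> convergent (\<lambda>N. (\<Sum>n=1..N. \<integral>x. f (ipow M T (a n) x) * g (ipow M S (b n) x) \<partial>M) / real N)) \<and>
    (\<exists>A\<in>sets M. measure M A > 0 \<and>
       (\<forall>n\<ge>1. measure M (ipow M T (a n) -` A \<inter> ipow M S (b n) -` A \<inter> space M) = 0))"
proof -
  define E where "E n \<longleftrightarrow> (\<exists>k. 4^k < n \<and> n \<le> 2*4^k)" for n :: nat
  obtain \<pi> where pi: "bij \<pi>" "\<pi> 0 = 0" "\<pi> 1 = 1" "\<forall>n\<ge>1. \<pi> (4*b n) = 4*a n + 1"
      "\<forall>n\<ge>1. \<pi> (4*b n + 1) = (if E n then 4*a n else 4*a n + 2)"
    using exists_pi[OF assms, of E] by blast
  define M where "M = bernoulli_shift p2"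
  define T where "T = Rc id 1"
  define S where "S = Rc \<pi> 1"
  have inv0: "inv \<pi> 0 = 0" using pi by (simp add: bij_is_inj inv_f_eq)
  have inv1: "inv \<pi> 1 = 1" using pi by (simp add: bij_is_inj inv_f_eq)
  have ipT: "ipow M T m x j = x (j + 4*m)" for m x j
    unfolding M_def T_def by (simp add: ipow_Rc Rc_apply)
  have ipS: "ipow M S m x j = x (\<pi> (inv \<pi> j + 4*m))" for m x j
    unfolding M_def S_def by (simp add: ipow_Rc pi(1) Rc_apply)
  have sets_zero: "{x::int\<Rightarrow>nat. x j = 0} \<in> sets M" for j
    using meas_cyl(1)[of "{j}" "\<lambda>_. 0"] by (simp add: M_def)
  define f :: "(int \<Rightarrow> nat) \<Rightarrow> real" where "f = indicator {x. x 0 = 0}"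
  define g :: "(int \<Rightarrow> nat) \<Rightarrow> real" where "g = indicator {x. x 1 = 0}"
  define t :: "nat \<Rightarrow> real" where "t n = (if E n then 1/2 else 1/4)" for n
  have integ: "(\<integral>x. f (ipow M T (a n) x) * g (ipow M S (b n) x) \<partial>M) = t n" if n: "n \<ge> 1" for n
  proof -
    define c where "c = (if E n then 4*a n else 4*a n + 2)"
    have c: "\<pi> (1 + 4 * b n) = c" using pi(5) n by (simp add: c_def add.commute)
    have "(\<lambda>x. f (ipow M T (a n) x) * g (ipow M S (b n) x)) = indicator {x. \<forall>j\<in>{4 * a n, c}. x j = (\<lambda>_. 0) j}"
      by (auto simp: fun_eq_iff f_def g_def ipT ipS inv1 c indicator_def)
    then have "(\<integral>x. f (ipow M T (a n) x) * g (ipow M S (b n) x) \<partial>M) = measure M {x. \<forall>j\<in>{4 * a n, c}. x j = (\<lambda>_. 0) j}"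
      by (simp add: M_def)
    also have "\<dots> = (1/2) ^ card {4 * a n, c}"
      unfolding M_def by (rule meas_cyl(2)) auto
    also have "\<dots> = t n" by (simp add: t_def c_def)
    finally show ?thesis .
  qed
  have nc: "\<not> convergent (\<lambda>N. (\<Sum>n=1..N. \<integral>x. f (ipow M T (a n) x) * g (ipow M S (b n) x) \<partial>M) / real N)"
  proof -
    have "(\<lambda>N. (\<Sum>n=1..N. \<integral>x. f (ipow M T (a n) x) * g (ipow M S (b n) x) \<partial>M) / real N)
        = (\<lambda>N. (\<Sum>n=1..N. t n) / real N)"
      by (intro ext arg_cong2[where f="(/)"] sum.cong refl) (simp add: integ)
    moreover have "\<not> convergent (\<lambda>N. (\<Sum>n=1..N. t n) / real N)"
      by (rule dens) (simp add: t_def E_def)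
    ultimately show ?thesis by simp
  qed
  define cc :: "int \<Rightarrow> nat" where "cc j = (if j = 0 then 0 else 1)" for j
  define A where "A = {x::int\<Rightarrow>nat. \<forall>j\<in>{0,1}. x j = cc j}"
  have A: "A \<in> sets M" "measure M A = 1/4"
    using meas_cyl[of "{0,1}" cc] by (auto simp: A_def M_def cc_def)
  have disj: "ipow M T (a n) -` A \<inter> ipow M S (b n) -` A \<inter> space M = {}" if n: "n \<ge> 1" for n
  proof -
    have "\<pi> (4 * b n) = 4*a n + 1" using pi(4) n by simp
    then show ?thesis by (auto simp: A_def cc_def ipT ipS inv0 add.commute)
  qed
  have h1: "prob_space M" unfolding M_def by (rule prob_space_bs)
  have h2: "bernoulli M T" unfolding M_def T_def by (rule bernoulli_Rc) simp
  have h3: "bernoulli M S" unfolding M_def S_def by (rule bernoulli_Rc[OF pi(1)])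
  have h4: "f \<in> borel_measurable M" unfolding f_def by (rule borel_measurable_indicator[OF sets_zero])
  have h5: "g \<in> borel_measurable M" unfolding g_def by (rule borel_measurable_indicator[OF sets_zero])
  have h6: "\<exists>C. AE x in M. \<bar>f x\<bar> \<le> C" by (intro exI[of _ 1] AE_I2) (simp add: f_def indicator_def)
  have h7: "\<exists>C. AE x in M. \<bar>g x\<bar> \<le> C" by (intro exI[of _ 1] AE_I2) (simp add: g_def indicator_def)
  have h8: "measure M A > 0" using A(2) by simp
  have h9: "\<forall>n\<ge>1. measure M (ipow M T (a n) -` A \<inter> ipow M S (b n) -` A \<inter> space M) = 0"
    using disj by simp
  have h10: "\<exists>f g :: (int \<Rightarrow> nat) \<Rightarrow> real.
       f \<in> borel_measurable M \<and> g \<in> borel_measurable M \<and>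
       (\<exists>C. AE x in M. \<bar>f x\<bar> \<le> C) \<and> (\<exists>C. AE x in M. \<bar>g x\<bar> \<le> C) \<and>
       \<not> convergent (\<lambda>N. (\<Sum>n=1..N. \<integral>x. f (ipow M T (a n) x) * g (ipow M S (b n) x) \<partial>M) / real N)"
    using h4 h5 h6 h7 nc by blast
  have h11: "\<exists>A\<in>sets M. measure M A > 0 \<and>
       (\<forall>n\<ge>1. measure M (ipow M T (a n) -` A \<inter> ipow M S (b n) -` A \<inter> space M) = 0)"
    using A(1) h8 h9 by blast
  show ?thesis using h1 h2 h3 h10 h11 by blast
qed

end
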